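(* Let $(W,\omega^W)$ be a vertex operator algebra and $\omega'\in\operatorname{Sc}(W,\omega^W)$ with $Y(\omega',z)=\sum_nL'(n)z^{-n-2}$. Then $L^W(n)=L'(n)$ on $C_W(C_W(\langle\omega'\rangle))$ for all $n\ge -1$.
   Context: $Y(\omega^W,z)=\sum_nL^W(n)z^{-n-2}$. A semi-conformal vector $\omega'$ of $(W,\omega^W)$ is the conformal vector of a vertex operator subalgebra $(U,\omega')$ (possibly different conformal vector) with $\omega^W_n|_U=\omega'_n|_U$ for all $n\ge0$; $\operatorname{Sc}(W,\omega^W)$ is the set of these. $C_W(U)=\{v\in W:u_nv=0\ \forall u\in U,n\ge0\}$; $\langle\omega'\rangle$ is the vertex subalgebra generated by $\omega'$ and $\mathbf1$. *)

theory Defs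
  imports Complex_Main
begin

text \<open>A vertex algebra structure on a type 'v is given by a scalar
multiplication smul :: complex => 'v => 'v (making 'v a complex vector space)
and a mode map Y :: 'v => int => 'v => 'v, where Y u n v is u_n v, i.e.
Y(u,z) = sum_n u_n z^(-n-1).  L(n) = omega_(n+1).\<close>

definition fsum :: "(nat \<Rightarrow> 'v::comm_monoid_add) \<Rightarrow> 'v" where
  "fsum f = sum f {i. f i \<noteq> 0}"

definition sgn_pow :: "int \<Rightarrow> complex" where
  "sgn_pow r = (if even r then 1 else -1)"

definition is_VOA ::
  "(complex \<Rightarrow> 'v::ab_group_add \<Rightarrow> 'v) \<Rightarrow> ('v \<Rightarrow> int \<Rightarrow> 'v \<Rightarrow> 'v) \<Rightarrow> 'v \<Rightarrow> 'v \<Rightarrow> 'v set \<Rightarrow> bool"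
  where
  "is_VOA smul Y one \<omega> V \<longleftrightarrow>
     module.subspace smul V \<and> one \<in> V \<and> \<omega> \<in> V \<and>
     (\<forall>u\<in>V. \<forall>v\<in>V. \<forall>n. Y u n v \<in> V) \<and>
     (\<forall>u\<in>V. \<forall>v\<in>V. \<forall>w\<in>V. \<forall>a b n.
         Y (smul a u + smul b v) n w = smul a (Y u n w) + smul b (Y v n w) \<and>
         Y w n (smul a u + smul b v) = smul a (Y w n u) + smul b (Y w n v)) \<and>
     (\<forall>u\<in>V. \<forall>v\<in>V. \<exists>N. \<forall>n\<ge>N. Y u n v = 0) \<and>
     (\<forall>v\<in>V. \<forall>n. Y one n v = (if n = -1 then v else 0)) \<and>
     (\<forall>u\<in>V. Y u (-1) one = u \<and> (\<forall>n\<ge>0. Y u n one = 0)) \<and>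
     (\<forall>u\<in>V. \<forall>v\<in>V. \<forall>w\<in>V. \<forall>p q r.
        fsum (\<lambda>i. smul (of_int p gchoose i) (Y (Y u (r + int i) v) (p + q - int i) w))
        = fsum (\<lambda>i. smul ((-1) ^ i * (of_int r gchoose i))
             (Y u (p + r - int i) (Y v (q + int i) w)
              - smul (sgn_pow r) (Y v (q + r - int i) (Y u (p + int i) w))))) \<and>
     (\<exists>c::complex. \<forall>m n. \<forall>v\<in>V.
        Y \<omega> (m + 1) (Y \<omega> (n + 1) v) - Y \<omega> (n + 1) (Y \<omega> (m + 1) v)
        = smul (of_int (m - n)) (Y \<omega> (m + n + 1) v)
          + (if m + n = 0 then smul ((of_int m ^ 3 - of_int m) / 12 * c) v else 0)) \<and>
     (\<forall>u\<in>V. \<forall>v\<in>V. \<forall>n. Y (Y \<omega> 0 u) n v = smul (- of_int n) (Y u (n - 1) v)) \<and>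
     Y \<omega> 1 \<omega> = smul 2 \<omega> \<and>
     (\<forall>v\<in>V. \<exists>f :: int \<Rightarrow> 'v. finite {n. f n \<noteq> 0} \<and>
        (\<forall>n. f n \<in> V \<and> Y \<omega> 1 (f n) = smul (of_int n) (f n)) \<and>
        v = sum f {n. f n \<noteq> 0}) \<and>
     (\<forall>n::int. \<exists>B. finite B \<and> B \<subseteq> V \<and>
        {v\<in>V. Y \<omega> 1 v = smul (of_int n) v} \<subseteq> module.span smul B) \<and>
     (\<exists>N::int. \<forall>n<N. \<forall>v\<in>V. Y \<omega> 1 v = smul (of_int n) v \<longrightarrow> v = 0)"

definition Sc ::
  "(complex \<Rightarrow> 'v::ab_group_add \<Rightarrow> 'v) \<Rightarrow> ('v \<Rightarrow> int \<Rightarrow> 'v \<Rightarrow> 'v) \<Rightarrow> 'v \<Rightarrow> 'v \<Rightarrow> 'v set"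
  where
  "Sc smul Y one \<omega> = {\<omega>'. \<exists>U. is_VOA smul Y one \<omega>' U \<and>
       (\<forall>n\<ge>0. \<forall>v\<in>U. Y \<omega> n v = Y \<omega>' n v)}"

definition commutant :: "('v \<Rightarrow> int \<Rightarrow> 'v \<Rightarrow> 'v::zero) \<Rightarrow> 'v set \<Rightarrow> 'v set" where
  "commutant Y S = {v. \<forall>u\<in>S. \<forall>n\<ge>0. Y u n v = 0}"

definition gen_subalg ::
  "(complex \<Rightarrow> 'v::ab_group_add \<Rightarrow> 'v) \<Rightarrow> ('v \<Rightarrow> int \<Rightarrow> 'v \<Rightarrow> 'v) \<Rightarrow> 'v \<Rightarrow> 'v set \<Rightarrow> 'v set"
  where
  "gen_subalg smul Y one X = \<Inter> {S. module.subspace smul S \<and> one \<in> S \<and> X \<subseteq> S \<and>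
       (\<forall>u\<in>S. \<forall>v\<in>S. \<forall>n. Y u n v \<in> S)}"

end

theory Submission
  imports Defs
begin

lemma fsum_single:
  assumes "\<And>i. i \<noteq> 0 \<Longrightarrow> f i = 0"
  shows "fsum f = f 0"
proof (cases "f 0 = 0")
  case True
  then have "{i. f i \<noteq> 0} = {}" using assms by (metis (mono_tags) empty_Collect_eq)
  then show ?thesis using True by (simp add: fsum_def)
next
  case False
  then have "{i. f i \<noteq> 0} = {0}" using assms by auto
  then show ?thesis by (simp add: fsum_def)
qed

theorem proposition2p6:
  fixes smul :: "complex \<Rightarrow> 'v::ab_group_add \<Rightarrow> 'v"
    and Y :: "'v \<Rightarrow> int \<Rightarrow> 'v \<Rightarrow> 'v"
    and one \<omega> \<omega>' :: 'v
  assumes "vector_space smul"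
    and "is_VOA smul Y one \<omega> UNIV"
    and "\<omega>' \<in> Sc smul Y one \<omega>"
  shows "\<forall>n\<ge>-1. \<forall>v \<in> commutant Y (commutant Y (gen_subalg smul Y one {\<omega>'})).
           Y \<omega> (n + 1) v = Y \<omega>' (n + 1) v"
proof -
  interpret vector_space smul by fact
  have lin1: "\<And>u v w a b n. Y (smul a u + smul b v) n w = smul a (Y u n w) + smul b (Y v n w)"
    using assms(2) unfolding is_VOA_def by simp
  have lin2: "\<And>u v w a b n. Y w n (smul a u + smul b v) = smul a (Y w n u) + smul b (Y w n v)"
    using assms(2) unfolding is_VOA_def by simp
  have vac: "\<And>v n. Y one n v = (if n = -1 then v else 0)"
    using assms(2) unfolding is_VOA_def by simp
  have cre1: "\<And>u. Y u (-1) one = u"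
    using assms(2) unfolding is_VOA_def by simp
  have cre2: "\<And>u n. n \<ge> 0 \<Longrightarrow> Y u n one = 0"
    using assms(2) unfolding is_VOA_def by simp
  note cre = cre1 cre2
  have bor: "\<And>u v w p q r.
        fsum (\<lambda>i. smul (of_int p gchoose i) (Y (Y u (r + int i) v) (p + q - int i) w))
        = fsum (\<lambda>i. smul ((-1) ^ i * (of_int r gchoose i))
             (Y u (p + r - int i) (Y v (q + int i) w)
              - smul (sgn_pow r) (Y v (q + r - int i) (Y u (p + int i) w))))"
    using assms(2) unfolding is_VOA_def by simp
  have Y0r: "\<And>w n. Y w n 0 = 0"
    using lin2[where a=0 and b=0 and u=0 and v=0] by simp
  have Y0l: "\<And>w n. Y 0 n w = 0"
    using lin1[where a=0 and b=0 and u=0 and v=0] by simp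
  have Ydiffl: "\<And>u v n w. Y (u - v) n w = Y u n w - Y v n w"
    using lin1[where a=1 and b="-1"] by simp
  have Ydiffr: "\<And>u v n w. Y w n (u - v) = Y w n u - Y w n v"
    using lin2[where a=1 and b="-1"] by simp
  have Yaddl: "\<And>u v n w. Y (u + v) n w = Y u n w + Y v n w"
    using lin1[where a=1 and b=1] by simp
  have Ysmull: "\<And>c u n w. Y (smul c u) n w = smul c (Y u n w)"
    using lin1[where b=0] by simp
  obtain U where U: "is_VOA smul Y one \<omega>' U" and UL: "\<And>n v. n \<ge> 0 \<Longrightarrow> v \<in> U \<Longrightarrow> Y \<omega> n v = Y \<omega>' n v"
    using assms(3) unfolding Sc_def by blast
  have w'U: "\<omega>' \<in> U" using U unfolding is_VOA_def by simp
  have rhs: "fsum (\<lambda>i. smul ((-1) ^ i * (of_int r gchoose i))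
             (Y u (-1 + r - int i) (Y v (0 + int i) one)
              - smul (sgn_pow r) (Y v (0 + r - int i) (Y u (-1 + int i) one))))
        = - smul (sgn_pow r) (Y v r u)" for u v r
  proof -
    have "fsum (\<lambda>i. smul ((-1) ^ i * (of_int r gchoose i))
             (Y u (-1 + r - int i) (Y v (0 + int i) one)
              - smul (sgn_pow r) (Y v (0 + r - int i) (Y u (-1 + int i) one))))
        = smul ((-1) ^ 0 * (of_int r gchoose 0))
             (Y u (-1 + r - int 0) (Y v (0 + int 0) one)
              - smul (sgn_pow r) (Y v (0 + r - int 0) (Y u (-1 + int 0) one)))"
    proof (rule fsum_single)
      fix i :: nat assume "i \<noteq> 0"
      then have "Y u (-1 + int i) one = 0" by (intro cre(2)) simp
      moreover have "Y v (0 + int i) one = 0" by (intro cre(2)) simp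
      ultimately show "smul ((-1) ^ i * (of_int r gchoose i))
             (Y u (-1 + r - int i) (Y v (0 + int i) one)
              - smul (sgn_pow r) (Y v (0 + r - int i) (Y u (-1 + int i) one))) = 0"
        by (simp add: Y0r)
    qed
    also have "\<dots> = - smul (sgn_pow r) (Y v r u)"
      using cre by (simp add: Y0r)
    finally show ?thesis .
  qed
  have sgninv: "smul (sgn_pow r) x = smul (sgn_pow r) y \<Longrightarrow> x = y" for r x y
  proof -
    assume h: "smul (sgn_pow r) x = smul (sgn_pow r) y"
    have "smul (sgn_pow r) (smul (sgn_pow r) x) = smul (sgn_pow r) (smul (sgn_pow r) y)"
      using h by simp
    moreover have "sgn_pow r * sgn_pow r = 1" by (simp add: sgn_pow_def)
    ultimately show "x = y" by (simp add: scale_scale)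
  qed
  have key: "Y \<omega>' n \<omega> = Y \<omega>' n \<omega>'" if n: "n \<ge> 0" for n
  proof -
    have "fsum (\<lambda>i. smul (of_int (-1) gchoose i) (Y (Y \<omega> (n + int i) \<omega>') (-1 + 0 - int i) one))
        = fsum (\<lambda>i. smul (of_int (-1) gchoose i) (Y (Y \<omega>' (n + int i) \<omega>') (-1 + 0 - int i) one))"
      using UL w'U n by simp
    then have "- smul (sgn_pow n) (Y \<omega>' n \<omega>) = - smul (sgn_pow n) (Y \<omega>' n \<omega>')"
      using bor[where p="-1" and r=n and u=\<omega> and v=\<omega>' and q=0 and w=one] bor[where p="-1" and r=n and u=\<omega>' and v=\<omega>' and q=0 and w=one]
        rhs[where u=\<omega> and r=n and v=\<omega>'] rhs[where u=\<omega>' and r=n and v=\<omega>'] by simp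
    then show ?thesis using sgninv by simp
  qed
  define T where "T = {x. \<forall>n\<ge>0. Y x n (\<omega> - \<omega>') = 0}"
  have prodT: "Y a r b \<in> T" if aT: "a \<in> T" and bT: "b \<in> T" for a b r
  proof -
    have "Y (Y a r b) q (\<omega> - \<omega>') = 0" if q: "q \<ge> 0" for q
    proof -
      let ?w = "\<omega> - \<omega>'"
      have "fsum (\<lambda>i. smul (of_int 0 gchoose i) (Y (Y a (r + int i) b) (0 + q - int i) ?w))
         = smul (of_int 0 gchoose 0) (Y (Y a (r + int 0) b) (0 + q - int 0) ?w)"
        by (rule fsum_single) (simp add: gbinomial_0_left)
      moreover have "fsum (\<lambda>i. smul ((-1) ^ i * (of_int r gchoose i))
             (Y a (0 + r - int i) (Y b (q + int i) ?w)
              - smul (sgn_pow r) (Y b (q + r - int i) (Y a (0 + int i) ?w)))) = fsum (\<lambda>i. 0)"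
      proof -
        have "Y b (q + int i) ?w = 0" "Y a (0 + int i) ?w = 0" for i :: nat
          using aT bT q unfolding T_def by auto
        then show ?thesis by (simp add: Y0r)
      qed
      moreover have "fsum (\<lambda>i. 0::'v) = 0" by (simp add: fsum_def)
      ultimately show ?thesis using bor[where p=0 and r=r and u=a and v=b and q=q and w="?w"] by simp
    qed
    then show ?thesis unfolding T_def by simp
  qed
  have Tsub: "subspace T"
    unfolding subspace_def T_def by (auto simp: Y0l Yaddl Ysmull)
  have oneT: "one \<in> T" unfolding T_def by (simp add: vac)
  have w'T: "\<omega>' \<in> T" unfolding T_def by (simp add: Ydiffr key)
  have genT: "gen_subalg smul Y one {\<omega>'} \<subseteq> T"
    unfolding gen_subalg_def using Tsub oneT w'T prodT by blast
  have dC: "\<omega> - \<omega>' \<in> commutant Y (gen_subalg smul Y one {\<omega>'})"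
    using genT unfolding commutant_def T_def by blast
  show ?thesis
  proof (intro allI impI ballI)
    fix n :: int and v
    assume n: "n \<ge> -1" and v: "v \<in> commutant Y (commutant Y (gen_subalg smul Y one {\<omega>'}))"
    have "Y (\<omega> - \<omega>') (n + 1) v = 0" using v dC n unfolding commutant_def by auto
    then show "Y \<omega> (n + 1) v = Y \<omega>' (n + 1) v" by (simp add: Ydiffl)
  qed
qed

end
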